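(* Let $G$ act on the CAT(0) cube complex $X$ by automorphisms non-transversely, and let $\gamma$ be a segment. Then for all vertices $x,y,z$ of $X$, $$\left|\omega_{\gamma}(x,y)+\omega_{\gamma}(y,z)+\omega_{\gamma}(z,x)\right|\le 6.$$
   Context: $\mathcal{H}(X)$ is the set of halfspaces of $X$, $\overline\Phi$ the complement of $\Phi$. Two halfspaces are nested if one of $\Phi\subseteq\Psi$, $\overline{\Phi}\subseteq\Psi$, $\Phi\subseteq\overline{\Psi}$, $\overline{\Phi}\subseteq\overline{\Psi}$ holds, transverse otherwise; the action is non-transverse if there are no $\Phi\in\mathcal H(X)$, $h\in G$ with $\Phi$ and $h\Phi$ transverse. $\Phi\supsetneq\Psi$ tightly means $\Phi\supsetneq\Psi$ and no halfspace $\Phi'$ satisfies $\Phi\supsetneq\Phi'\supsetneq\Psi$. For vertices $x,y$, $[x,y]=\{\Phi\in\mathcal H(X): x\notin\Phi,\ y\in\Phi\}$. A segment is a finite sequence $\gamma=(\Phi_0,\dots,\Phi_r)$, $r\ge0$, of halfspaces with $\Phi_i\supsetneq\Phi_{i+1}$ tightly; its reverse is $\overline\gamma=(\overline\Phi_r,\dots,\overline\Phi_0)$. Two segments overlap if some halfspace of one is equal or transverse to some halfspace of the other. A segment is in $[x,y]$ if all its halfspaces lie in $[x,y]$. Copies of $\gamma$ are the segments $h\gamma$, $h\in G$. $c_\gamma(x,y)$ is the largest cardinality of a set of pairwise non-overlapping copies of $\gamma$ all lying in $[x,y]$, and $\omega_\gamma(x,y)=c_\gamma(x,y)-c_{\overline\gamma}(x,y)$.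 *)

theory Defs
  imports "HOL-Algebra.Group_Action"
begin

text \<open>CAT(0) cube complexes are modelled by their 1-skeleta, i.e. median graphs
  (Chepoi/Roller/Gerasimov).  The vertex set is the type 'v, adjacency is E.\<close>

definition graph_path :: "('v \<Rightarrow> 'v \<Rightarrow> bool) \<Rightarrow> 'v list \<Rightarrow> bool" where
  "graph_path E p \<longleftrightarrow> p \<noteq> [] \<and> (\<forall>i. Suc i < length p \<longrightarrow> E (p ! i) (p ! Suc i))"

definition graph_dist :: "('v \<Rightarrow> 'v \<Rightarrow> bool) \<Rightarrow> 'v \<Rightarrow> 'v \<Rightarrow> nat" where
  "graph_dist E x y = (LEAST n. \<exists>p. graph_path E p \<and> hd p = x \<and> last p = y \<and> length p = Suc n)"

definition geod_interval :: "('v \<Rightarrow> 'v \<Rightarrow> bool) \<Rightarrow> 'v \<Rightarrow> 'v \<Rightarrow> 'v set" where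
  "geod_interval E x y = {z. graph_dist E x z + graph_dist E z y = graph_dist E x y}"

definition median_graph :: "('v \<Rightarrow> 'v \<Rightarrow> bool) \<Rightarrow> bool" where
  "median_graph E \<longleftrightarrow>
     (\<forall>u v. E u v \<longrightarrow> E v u) \<and> (\<forall>u. \<not> E u u) \<and>
     (\<forall>x y. \<exists>p. graph_path E p \<and> hd p = x \<and> last p = y) \<and>
     (\<forall>x y z. \<exists>!m. m \<in> geod_interval E x y \<inter> geod_interval E y z \<inter> geod_interval E x z)"

definition convex_vset :: "('v \<Rightarrow> 'v \<Rightarrow> bool) \<Rightarrow> 'v set \<Rightarrow> bool" where
  "convex_vset E S \<longleftrightarrow> (\<forall>x\<in>S. \<forall>y\<in>S. geod_interval E x y \<subseteq> S)"

text \<open>Halfspaces = complementary components of hyperplanes = nonempty proper convex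
  vertex sets with convex complement.\<close>
definition halfspaces :: "('v \<Rightarrow> 'v \<Rightarrow> bool) \<Rightarrow> 'v set set" where
  "halfspaces E = {S. S \<noteq> {} \<and> S \<noteq> UNIV \<and> convex_vset E S \<and> convex_vset E (- S)}"

definition nested :: "'v set \<Rightarrow> 'v set \<Rightarrow> bool" where
  "nested A B \<longleftrightarrow> A \<subseteq> B \<or> - A \<subseteq> B \<or> A \<subseteq> - B \<or> - A \<subseteq> - B"

definition transverse :: "'v set \<Rightarrow> 'v set \<Rightarrow> bool" where
  "transverse A B \<longleftrightarrow> \<not> nested A B"

definition non_transverse_action :: "('v \<Rightarrow> 'v \<Rightarrow> bool) \<Rightarrow> ('g, 'm) monoid_scheme \<Rightarrow> ('g \<Rightarrow> 'v \<Rightarrow> 'v) \<Rightarrow> bool" where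
  "non_transverse_action E G \<phi> \<longleftrightarrow>
     \<not> (\<exists>A\<in>halfspaces E. \<exists>h\<in>carrier G. transverse A (\<phi> h ` A))"

definition tightly_contains :: "('v \<Rightarrow> 'v \<Rightarrow> bool) \<Rightarrow> 'v set \<Rightarrow> 'v set \<Rightarrow> bool" where
  "tightly_contains E A B \<longleftrightarrow> B \<subset> A \<and> \<not> (\<exists>C\<in>halfspaces E. C \<subset> A \<and> B \<subset> C)"

definition segment :: "('v \<Rightarrow> 'v \<Rightarrow> bool) \<Rightarrow> 'v set list \<Rightarrow> bool" where
  "segment E \<gamma> \<longleftrightarrow> \<gamma> \<noteq> [] \<and> set \<gamma> \<subseteq> halfspaces E \<and>
     (\<forall>i. Suc i < length \<gamma> \<longrightarrow> tightly_contains E (\<gamma> ! i) (\<gamma> ! Suc i))"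

definition seg_reverse :: "'v set list \<Rightarrow> 'v set list" where
  "seg_reverse \<gamma> = rev (map uminus \<gamma>)"

definition overlap :: "'v set list \<Rightarrow> 'v set list \<Rightarrow> bool" where
  "overlap \<gamma> \<delta> \<longleftrightarrow> (\<exists>A\<in>set \<gamma>. \<exists>B\<in>set \<delta>. A = B \<or> transverse A B)"

definition hs_interval :: "('v \<Rightarrow> 'v \<Rightarrow> bool) \<Rightarrow> 'v \<Rightarrow> 'v \<Rightarrow> 'v set set" where
  "hs_interval E x y = {A \<in> halfspaces E. x \<notin> A \<and> y \<in> A}"

definition copies :: "('g, 'm) monoid_scheme \<Rightarrow> ('g \<Rightarrow> 'v \<Rightarrow> 'v) \<Rightarrow> 'v set list \<Rightarrow> 'v set list set" where
  "copies G \<phi> \<gamma> = {map (\<lambda>A. \<phi> h ` A) \<gamma> | h. h \<in> carrier G}"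

definition c_count :: "('v \<Rightarrow> 'v \<Rightarrow> bool) \<Rightarrow> ('g, 'm) monoid_scheme \<Rightarrow> ('g \<Rightarrow> 'v \<Rightarrow> 'v)
    \<Rightarrow> 'v set list \<Rightarrow> 'v \<Rightarrow> 'v \<Rightarrow> nat" where
  "c_count E G \<phi> \<gamma> x y = Max {card S | S. S \<subseteq> copies G \<phi> \<gamma> \<and> finite S \<and>
      (\<forall>s\<in>S. set s \<subseteq> hs_interval E x y) \<and>
      (\<forall>s\<in>S. \<forall>t\<in>S. s \<noteq> t \<longrightarrow> \<not> overlap s t)}"

definition omega :: "('v \<Rightarrow> 'v \<Rightarrow> bool) \<Rightarrow> ('g, 'm) monoid_scheme \<Rightarrow> ('g \<Rightarrow> 'v \<Rightarrow> 'v)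
    \<Rightarrow> 'v set list \<Rightarrow> 'v \<Rightarrow> 'v \<Rightarrow> int" where
  "omega E G \<phi> \<gamma> x y = int (c_count E G \<phi> \<gamma> x y) - int (c_count E G \<phi> (seg_reverse \<gamma>) x y)"

end

theory Submission
  imports Defs
begin


lemma med_conn: "median_graph E \<Longrightarrow> \<exists>p. graph_path E p \<and> hd p = x \<and> last p = y"
  unfolding median_graph_def by blast

lemma dist_path:
  assumes "median_graph E"
  shows "\<exists>p. graph_path E p \<and> hd p = x \<and> last p = y \<and> length p = Suc (graph_dist E x y)"
proof -
  obtain p where p: "graph_path E p" "hd p = x" "last p = y" using med_conn[OF assms] by blast
  then have "p \<noteq> []" unfolding graph_path_def by auto
  then have "\<exists>n p. graph_path E p \<and> hd p = x \<and> last p = y \<and> length p = Suc n"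
    using p by (intro exI[of _ "length p - 1"] exI[of _ p]) auto
  then show ?thesis unfolding graph_dist_def by (rule LeastI_ex)
qed

lemma dist_le:
  assumes "graph_path E p" "hd p = x" "last p = y"
  shows "graph_dist E x y \<le> length p - 1"
proof -
  have "p \<noteq> []" using assms unfolding graph_path_def by auto
  then show ?thesis unfolding graph_dist_def
    using assms by (intro Least_le) auto
qed

lemma dist0: assumes "median_graph E" "graph_dist E x y = 0" shows "x = y"
proof -
  obtain p where p: "graph_path E p" "hd p = x" "last p = y" "length p = Suc 0"
    using dist_path[OF assms(1), of x y] assms(2) by auto
  then obtain a where "p = [a]" by (cases p) auto
  then show ?thesis using p by auto
qed

lemma dist_edge: assumes "median_graph E" "E u v" shows "graph_dist E u v = 1"
proof -
  have "graph_path E [u,v]" using assms(2) unfolding graph_path_def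
    by (auto simp: less_Suc_eq)
  then have "graph_dist E u v \<le> 1" using dist_le[of E "[u,v]" u v] by auto
  moreover have "u \<noteq> v" using assms unfolding median_graph_def by auto
  then have "graph_dist E u v \<noteq> 0" using dist0[OF assms(1)] by auto
  ultimately show ?thesis by auto
qed

lemma interval_edge:
  assumes "median_graph E" "E u v" "m \<in> geod_interval E u v" shows "m = u \<or> m = v"
  using assms dist_edge[OF assms(1,2)] dist0[OF assms(1), of u m] dist0[OF assms(1), of m v]
  unfolding geod_interval_def by (auto simp: add_is_1)

lemma edge_hs_char:
  assumes "median_graph E" "E u v" "A \<in> halfspaces E" "u \<notin> A" "v \<in> A"
  shows "w \<in> A \<longleftrightarrow> u \<notin> geod_interval E v w"
proof
  assume "w \<in> A"
  then show "u \<notin> geod_interval E v w" using assms(3,4,5) unfolding halfspaces_def convex_vset_def by blast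
next
  assume nu: "u \<notin> geod_interval E v w"
  show "w \<in> A"
  proof (rule ccontr)
    assume wA: "w \<notin> A"
    obtain m where m: "m \<in> geod_interval E u v" "m \<in> geod_interval E v w" "m \<in> geod_interval E u w"
      using assms(1) unfolding median_graph_def by blast
    have "m = u \<or> m = v" using interval_edge[OF assms(1,2) m(1)] .
    moreover have "m \<noteq> u" using nu m(2) by auto
    moreover have "v \<notin> geod_interval E u w" using wA assms(3,4,5) unfolding halfspaces_def convex_vset_def by blast
    ultimately show False using m(3) by auto
  qed
qed

lemma edge_hs_fin:
  assumes "median_graph E" "E u v" shows "finite (hs_interval E u v)"
proof -
  have "hs_interval E u v \<subseteq> {{w. u \<notin> geod_interval E v w}}"
    using edge_hs_char[OF assms] unfolding hs_interval_def by auto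
  then show ?thesis using finite_subset by blast
qed

lemma step_lemma: "\<not> P a \<Longrightarrow> P b \<Longrightarrow> a \<le> b \<Longrightarrow> \<exists>i. a \<le> i \<and> i < b \<and> \<not> P i \<and> P (Suc i)"
proof (induction b)
  case 0 then show ?case by auto
next
  case (Suc b)
  show ?case
  proof (cases "P b")
    case True
    then have "a \<noteq> Suc b" using Suc by auto
    then have "a \<le> b" using Suc by auto
    then show ?thesis using Suc.IH[OF Suc.prems(1) True] by (metis less_Suc_eq)
  next
    case False
    then show ?thesis using Suc by (intro exI[of _ b]) (auto simp: le_Suc_eq)
  qed
qed

lemma hs_path:
  assumes "graph_path E p"
  shows "hs_interval E (hd p) (last p) \<subseteq> (\<Union>i\<in>{i. Suc i < length p}. hs_interval E (p!i) (p!Suc i))"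
proof
  fix A assume A: "A \<in> hs_interval E (hd p) (last p)"
  have ne: "p \<noteq> []" using assms unfolding graph_path_def by auto
  have "\<not> (p!0 \<in> A)" "p ! (length p - 1) \<in> A" using A ne unfolding hs_interval_def
    by (auto simp: hd_conv_nth last_conv_nth)
  then obtain i where "i < length p - 1" "p!i \<notin> A" "p!Suc i \<in> A"
    using step_lemma[of "\<lambda>i. p!i \<in> A" 0 "length p - 1"] by auto
  then show "A \<in> (\<Union>i\<in>{i. Suc i < length p}. hs_interval E (p!i) (p!Suc i))"
    using A unfolding hs_interval_def by (intro UN_I[of i]) auto
qed

lemma hs_finite: assumes "median_graph E" shows "finite (hs_interval E x y)"
proof -
  obtain p where p: "graph_path E p" "hd p = x" "last p = y" using med_conn[OF assms] by blast
  have "finite (\<Union>i\<in>{i. Suc i < length p}. hs_interval E (p!i) (p!Suc i))"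
  proof (rule finite_UN_I)
    show "finite {i. Suc i < length p}" by (rule finite_subset[of _ "{..<length p}"]) auto
    fix i assume "i \<in> {i. Suc i < length p}"
    then show "finite (hs_interval E (p!i) (p!Suc i))"
      using p(1) edge_hs_fin[OF assms] unfolding graph_path_def by auto
  qed
  then show ?thesis using hs_path[OF p(1)] p by (metis finite_subset)
qed



definition valid where
  "valid E G \<phi> \<delta> a b S \<longleftrightarrow> S \<subseteq> copies G \<phi> \<delta> \<and> finite S \<and>
      (\<forall>s\<in>S. set s \<subseteq> hs_interval E a b) \<and>
      (\<forall>s\<in>S. \<forall>t\<in>S. s \<noteq> t \<longrightarrow> \<not> overlap s t)"

lemma c_count_valid: "c_count E G \<phi> \<delta> a b = Max {card S | S. valid E G \<phi> \<delta> a b S}"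
  unfolding c_count_def valid_def by simp

lemma valid_card_le:
  assumes "finite (hs_interval E a b)" "[] \<notin> copies G \<phi> \<delta>" "valid E G \<phi> \<delta> a b S"
  shows "card S \<le> card (hs_interval E a b)"
proof -
  have "inj_on hd S"
  proof
    fix s t assume st: "s \<in> S" "t \<in> S" "hd s = hd t"
    have "s \<noteq> []" "t \<noteq> []" using st assms(2,3) unfolding valid_def by auto
    then have "overlap s t" using st unfolding overlap_def by (metis list.set_sel(1))
    then show "s = t" using st assms(3) unfolding valid_def by auto
  qed
  moreover have "hd ` S \<subseteq> hs_interval E a b"
  proof
    fix A assume "A \<in> hd ` S"
    then obtain s where s: "s \<in> S" "A = hd s" by auto
    have "s \<noteq> []" using s assms(2,3) unfolding valid_def by auto
    then show "A \<in> hs_interval E a b" using s assms(3) unfolding valid_def by (metis list.set_sel(1) subsetD)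
  qed
  ultimately show ?thesis using card_inj_on_le[OF _ _ assms(1)] by blast
qed

lemma cc_props:
  assumes "finite (hs_interval E a b)" "[] \<notin> copies G \<phi> \<delta>"
  shows "valid E G \<phi> \<delta> a b S \<Longrightarrow> card S \<le> c_count E G \<phi> \<delta> a b"
    and "\<exists>S. valid E G \<phi> \<delta> a b S \<and> card S = c_count E G \<phi> \<delta> a b"
proof -
  let ?K = "{card S | S. valid E G \<phi> \<delta> a b S}"
  have fin: "finite ?K"
    by (rule finite_subset[of _ "{..card (hs_interval E a b)}"]) (use valid_card_le[OF assms] in auto)
  have "valid E G \<phi> \<delta> a b {}" unfolding valid_def by auto
  then have ne: "?K \<noteq> {}" by blast
  show "valid E G \<phi> \<delta> a b S \<Longrightarrow> card S \<le> c_count E G \<phi> \<delta> a b"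
    unfolding c_count_valid using fin by (intro Max_ge) auto
  show "\<exists>S. valid E G \<phi> \<delta> a b S \<and> card S = c_count E G \<phi> \<delta> a b"
    using Max_in[OF fin ne] unfolding c_count_valid by auto
qed

locale actx =
  fixes E :: "'v \<Rightarrow> 'v \<Rightarrow> bool" and G :: "('g, 'm) monoid_scheme" and \<phi> :: "'g \<Rightarrow> 'v \<Rightarrow> 'v"
  assumes med: "median_graph E"
    and ga: "group_action G (UNIV :: 'v set) \<phi>"
    and aut: "\<forall>h\<in>carrier G. \<forall>u v. E u v \<longleftrightarrow> E (\<phi> h u) (\<phi> h v)"
begin

lemma grp: "group G"
  using ga unfolding group_action_def group_hom_def by auto

lemma act_bij: "h \<in> carrier G \<Longrightarrow> bij (\<phi> h)"
  using group_action.inj_prop[OF ga] group_action.surj_prop[OF ga] by (simp add: bij_def)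

lemma inv_c: "h \<in> carrier G \<Longrightarrow> inv\<^bsub>G\<^esub> h \<in> carrier G"
  using grp by (simp add: group.inv_closed)

lemma act_inv: "h \<in> carrier G \<Longrightarrow> \<phi> (inv\<^bsub>G\<^esub> h) (\<phi> h a) = a"
  using group_action.orbit_sym_aux[OF ga] by blast

lemma act_inv2: "h \<in> carrier G \<Longrightarrow> \<phi> h (\<phi> (inv\<^bsub>G\<^esub> h) a) = a"
  using act_inv[OF inv_c] grp by (metis group.inv_inv)

lemma act_comp: "h \<in> carrier G \<Longrightarrow> k \<in> carrier G \<Longrightarrow>
   k \<otimes>\<^bsub>G\<^esub> inv\<^bsub>G\<^esub> h \<in> carrier G \<and> \<phi> (k \<otimes>\<^bsub>G\<^esub> inv\<^bsub>G\<^esub> h) (\<phi> h a) = \<phi> k a"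
  using group_action.composition_rule[OF ga] inv_c act_inv grp
  by (simp add: monoid.m_closed group.is_monoid)

lemma path_map: assumes "h \<in> carrier G" "graph_path E p" shows "graph_path E (map (\<phi> h) p)"
proof -
  have "E (\<phi> h u) (\<phi> h v)" if "E u v" for u v using aut assms(1) that by blast
  then show ?thesis using assms(2) unfolding graph_path_def by auto
qed

lemma dist_le_act: assumes "h \<in> carrier G" shows "graph_dist E (\<phi> h a) (\<phi> h b) \<le> graph_dist E a b"
proof -
  obtain p where p: "graph_path E p" "hd p = a" "last p = b" "length p = Suc (graph_dist E a b)"
    using dist_path[OF med] by blast
  have ne: "p \<noteq> []" using p unfolding graph_path_def by auto
  have "graph_dist E (\<phi> h a) (\<phi> h b) \<le> length (map (\<phi> h) p) - 1"
    by (rule dist_le) (use path_map[OF assms p(1)] p ne in \<open>auto simp: hd_map last_map\<close>)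
  then show ?thesis using p by simp
qed

lemma dist_act: assumes "h \<in> carrier G" shows "graph_dist E (\<phi> h a) (\<phi> h b) = graph_dist E a b"
proof -
  have "graph_dist E (\<phi> (inv\<^bsub>G\<^esub> h) (\<phi> h a)) (\<phi> (inv\<^bsub>G\<^esub> h) (\<phi> h b)) \<le> graph_dist E (\<phi> h a) (\<phi> h b)"
    by (rule dist_le_act[OF inv_c[OF assms]])
  then show ?thesis using dist_le_act[OF assms, of a b] act_inv[OF assms] by simp
qed

lemma interval_act: "h \<in> carrier G \<Longrightarrow> \<phi> h z \<in> geod_interval E (\<phi> h a) (\<phi> h b) \<longleftrightarrow> z \<in> geod_interval E a b"
  unfolding geod_interval_def by (simp add: dist_act)

lemma img_compl: "h \<in> carrier G \<Longrightarrow> \<phi> h ` (- S) = - (\<phi> h ` S)"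
  using act_bij by (simp add: bij_image_Compl_eq)

lemma convex_act: assumes "h \<in> carrier G" "convex_vset E S" shows "convex_vset E (\<phi> h ` S)"
  unfolding convex_vset_def
proof (intro ballI subsetI)
  fix x' y' z assume xy: "x' \<in> \<phi> h ` S" "y' \<in> \<phi> h ` S" and z: "z \<in> geod_interval E x' y'"
  obtain a b where ab: "a \<in> S" "b \<in> S" "x' = \<phi> h a" "y' = \<phi> h b" using xy by auto
  have "\<phi> h (\<phi> (inv\<^bsub>G\<^esub> h) z) \<in> geod_interval E (\<phi> h a) (\<phi> h b)" using z ab act_inv2[OF assms(1)] by simp
  then have "\<phi> (inv\<^bsub>G\<^esub> h) z \<in> geod_interval E a b" using interval_act[OF assms(1)] by blast
  then have "\<phi> (inv\<^bsub>G\<^esub> h) z \<in> S" using assms(2) ab unfolding convex_vset_def by blast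
  then show "z \<in> \<phi> h ` S" using act_inv2[OF assms(1)] by (metis image_eqI)
qed

lemma hs_act: assumes "h \<in> carrier G" "A \<in> halfspaces E" shows "\<phi> h ` A \<in> halfspaces E"
proof -
  have "\<phi> h ` A \<noteq> UNIV"
  proof
    assume "\<phi> h ` A = UNIV"
    then have "- (\<phi> h ` A) = {}" by auto
    then have "\<phi> h ` (- A) = {}" using img_compl[OF assms(1)] by simp
    then show False using assms(2) unfolding halfspaces_def by auto
  qed
  moreover have "convex_vset E (- (\<phi> h ` A))"
    using convex_act[OF assms(1), of "-A"] assms(2) img_compl[OF assms(1)] unfolding halfspaces_def by simp
  ultimately show ?thesis using convex_act[OF assms(1), of A] assms(2) unfolding halfspaces_def by auto
qed

lemma img_inv: "h \<in> carrier G \<Longrightarrow> \<phi> (inv\<^bsub>G\<^esub> h) ` (\<phi> h ` A) = A"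
  using act_inv by (simp add: image_comp comp_def)

lemma img_inv2: "h \<in> carrier G \<Longrightarrow> \<phi> h ` (\<phi> (inv\<^bsub>G\<^esub> h) ` A) = A"
  using act_inv2 by (simp add: image_comp comp_def)

lemma inj_psub: "inj f \<Longrightarrow> (f ` A \<subset> f ` B) = (A \<subset> B)"
  unfolding psubset_eq by (simp add: inj_image_subset_iff inj_image_eq_iff)

lemma copy_segment:
  assumes "segment E \<gamma>" "s \<in> copies G \<phi> \<gamma>" shows "segment E s"
proof -
  obtain h where h: "h \<in> carrier G" "s = map (\<lambda>A. \<phi> h ` A) \<gamma>" using assms(2) unfolding copies_def by auto
  have inj: "inj (\<phi> h)" "inj (\<phi> (inv\<^bsub>G\<^esub> h))" using act_bij[OF h(1)] act_bij[OF inv_c[OF h(1)]] by (simp_all add: bij_is_inj)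
  have "tightly_contains E (\<phi> h ` (\<gamma>!i)) (\<phi> h ` (\<gamma>!Suc i))" if i: "Suc i < length \<gamma>" for i
  proof -
    have t: "tightly_contains E (\<gamma>!i) (\<gamma>!Suc i)" using assms(1) i unfolding segment_def by auto
    have sub: "\<phi> h ` (\<gamma>!Suc i) \<subset> \<phi> h ` (\<gamma>!i)"
      using t inj_psub[OF inj(1), of "\<gamma>!Suc i" "\<gamma>!i"] unfolding tightly_contains_def by simp
    have nc: "\<not> (C \<subset> \<phi> h ` (\<gamma>!i) \<and> \<phi> h ` (\<gamma>!Suc i) \<subset> C)" if C: "C \<in> halfspaces E" for C
    proof
      assume c: "C \<subset> \<phi> h ` (\<gamma>!i) \<and> \<phi> h ` (\<gamma>!Suc i) \<subset> C"
      have "\<phi> (inv\<^bsub>G\<^esub> h) ` C \<subset> \<phi> (inv\<^bsub>G\<^esub> h) ` (\<phi> h ` (\<gamma>!i))"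
         "\<phi> (inv\<^bsub>G\<^esub> h) ` (\<phi> h ` (\<gamma>!Suc i)) \<subset> \<phi> (inv\<^bsub>G\<^esub> h) ` C"
        using inj_psub[OF inj(2), of C "\<phi> h ` (\<gamma>!i)"] inj_psub[OF inj(2), of "\<phi> h ` (\<gamma>!Suc i)" C] c by simp_all
      then have "\<phi> (inv\<^bsub>G\<^esub> h) ` C \<subset> \<gamma>!i" "\<gamma>!Suc i \<subset> \<phi> (inv\<^bsub>G\<^esub> h) ` C"
        by (simp_all only: img_inv[OF h(1)])
      moreover have "\<phi> (inv\<^bsub>G\<^esub> h) ` C \<in> halfspaces E" using hs_act[OF inv_c[OF h(1)] C] .
      ultimately show False using t unfolding tightly_contains_def by blast
    qed
    show ?thesis unfolding tightly_contains_def
    proof (intro conjI notI)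
      show "\<phi> h ` (\<gamma>!Suc i) \<subset> \<phi> h ` (\<gamma>!i)" by (rule sub)
    next
      assume "\<exists>C\<in>halfspaces E. C \<subset> \<phi> h ` (\<gamma>!i) \<and> \<phi> h ` (\<gamma>!Suc i) \<subset> C"
      then show False
      proof (rule bexE)
        fix C assume "C \<in> halfspaces E" "C \<subset> \<phi> h ` (\<gamma>!i) \<and> \<phi> h ` (\<gamma>!Suc i) \<subset> C"
        then show False using nc[of C] by simp
      qed
    qed
  qed
  note tt = this
  have g: "\<gamma> \<noteq> []" "set \<gamma> \<subseteq> halfspaces E" using assms(1) unfolding segment_def by auto
  have "set s \<subseteq> halfspaces E"
  proof
    fix B assume "B \<in> set s"
    then obtain A where "A \<in> set \<gamma>" "B = \<phi> h ` A" using h(2) by auto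
    then show "B \<in> halfspaces E" using hs_act[OF h(1)] g(2) by blast
  qed
  moreover have "s \<noteq> []" using g(1) h(2) by simp
  moreover have "\<forall>i. Suc i < length s \<longrightarrow> tightly_contains E (s ! i) (s ! Suc i)"
    using tt h(2) by simp
  ultimately show ?thesis unfolding segment_def by blast
qed

lemma copy_ne: "segment E \<gamma> \<Longrightarrow> [] \<notin> copies G \<phi> \<gamma>"
  unfolding copies_def segment_def by auto

end


lemma seg_rev_rev: "seg_reverse (seg_reverse s) = s"
  unfolding seg_reverse_def by (simp add: rev_map comp_def)

lemma set_rev: "set (seg_reverse s) = uminus ` set s"
  unfolding seg_reverse_def by simp

lemma hs_compl: "A \<in> halfspaces E \<Longrightarrow> - A \<in> halfspaces E"
  unfolding halfspaces_def by auto

lemma transverse_compl: "transverse (- A) (- B) = transverse A B"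
  unfolding transverse_def nested_def by auto

lemma overlap_rev: "overlap (seg_reverse s) (seg_reverse t) = overlap s t"
  unfolding overlap_def set_rev by (auto simp: transverse_compl)

lemma inj_rev: "inj seg_reverse"
  by (metis injI seg_rev_rev)

context actx begin

lemma copies_rev: "copies G \<phi> (seg_reverse \<delta>) = seg_reverse ` copies G \<phi> \<delta>"
proof -
  have "map (\<lambda>A. \<phi> h ` A) (seg_reverse \<delta>) = seg_reverse (map (\<lambda>A. \<phi> h ` A) \<delta>)" if h: "h \<in> carrier G" for h
    unfolding seg_reverse_def using img_compl[OF h] by (simp add: rev_map comp_def)
  note e = this
  show ?thesis unfolding copies_def
  proof (intro equalityI subsetI)
    fix s assume "s \<in> {map (\<lambda>A. \<phi> h ` A) (seg_reverse \<delta>) |h. h \<in> carrier G}"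
    then obtain h where h: "h \<in> carrier G" "s = map (\<lambda>A. \<phi> h ` A) (seg_reverse \<delta>)" by auto
    then show "s \<in> seg_reverse ` {map (\<lambda>A. \<phi> h ` A) \<delta> |h. h \<in> carrier G}" using e[OF h(1)] by auto
  next
    fix s assume "s \<in> seg_reverse ` {map (\<lambda>A. \<phi> h ` A) \<delta> |h. h \<in> carrier G}"
    then obtain h where h: "h \<in> carrier G" "s = seg_reverse (map (\<lambda>A. \<phi> h ` A) \<delta>)" by auto
    then show "s \<in> {map (\<lambda>A. \<phi> h ` A) (seg_reverse \<delta>) |h. h \<in> carrier G}" using e[OF h(1)] h by (intro CollectI exI[of _ h]) simp
  qed
qed

lemma valid_rev:
  assumes "valid E G \<phi> \<delta> a b S"
  shows "valid E G \<phi> (seg_reverse \<delta>) b a (seg_reverse ` S)"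
proof -
  have "seg_reverse ` S \<subseteq> copies G \<phi> (seg_reverse \<delta>)"
    using assms unfolding valid_def copies_rev by auto
  moreover have "\<forall>s\<in>seg_reverse ` S. set s \<subseteq> hs_interval E b a"
  proof
    fix s assume "s \<in> seg_reverse ` S"
    then obtain t where t: "t \<in> S" "s = seg_reverse t" by auto
    then have "set t \<subseteq> hs_interval E a b" using assms unfolding valid_def by auto
    then show "set s \<subseteq> hs_interval E b a" unfolding t set_rev hs_interval_def using hs_compl by auto
  qed
  moreover have "\<forall>s\<in>seg_reverse ` S. \<forall>t\<in>seg_reverse ` S. s \<noteq> t \<longrightarrow> \<not> overlap s t"
    using assms unfolding valid_def by (auto simp: overlap_rev)
  ultimately show ?thesis using assms unfolding valid_def by auto
qed

lemma c_rev: "c_count E G \<phi> (seg_reverse \<gamma>) x y = c_count E G \<phi> \<gamma> y x"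
proof -
  have "{card S | S. valid E G \<phi> (seg_reverse \<gamma>) x y S} = {card S | S. valid E G \<phi> \<gamma> y x S}"
  proof (intro equalityI subsetI)
    fix n assume "n \<in> {card S | S. valid E G \<phi> (seg_reverse \<gamma>) x y S}"
    then obtain S where S: "valid E G \<phi> (seg_reverse \<gamma>) x y S" "n = card S" by auto
    have "valid E G \<phi> \<gamma> y x (seg_reverse ` S)" using valid_rev[OF S(1)] by (simp add: seg_rev_rev)
    moreover have "card (seg_reverse ` S) = n" using S(2) inj_rev using card_image[OF inj_on_subset[OF inj_rev subset_UNIV]] by simp
    ultimately show "n \<in> {card S | S. valid E G \<phi> \<gamma> y x S}" by auto
  next
    fix n assume "n \<in> {card S | S. valid E G \<phi> \<gamma> y x S}"
    then obtain S where S: "valid E G \<phi> \<gamma> y x S" "n = card S" by auto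
    have "valid E G \<phi> (seg_reverse \<gamma>) x y (seg_reverse ` S)" using valid_rev[OF S(1)] by simp
    moreover have "card (seg_reverse ` S) = n" using S(2) inj_rev using card_image[OF inj_on_subset[OF inj_rev subset_UNIV]] by simp
    ultimately show "n \<in> {card S | S. valid E G \<phi> (seg_reverse \<gamma>) x y S}" by auto
  qed
  then show ?thesis unfolding c_count_valid by simp
qed

end


lemma cmp: "A \<in> hs_interval E a b \<Longrightarrow> B \<in> hs_interval E a b \<Longrightarrow> nested A B \<Longrightarrow> A \<subseteq> B \<or> B \<subseteq> A"
  unfolding hs_interval_def nested_def by blast

lemma seg_mono: "segment E s \<Longrightarrow> i \<le> j \<Longrightarrow> j < length s \<Longrightarrow> s!j \<subseteq> s!i"
proof (induction j)
  case 0 then show ?case by simp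
next
  case (Suc j)
  show ?case
  proof (cases "i = Suc j")
    case True then show ?thesis by simp
  next
    case False
    then have "i \<le> j" using Suc by simp
    then have "s!j \<subseteq> s!i" using Suc by simp
    moreover have "s!Suc j \<subseteq> s!j" using Suc(2,4) unfolding segment_def tightly_contains_def
      by (simp add: psubset_imp_subset)
    ultimately show ?thesis by simp
  qed
qed

lemma no_ov: "\<not> overlap s t \<Longrightarrow> A \<in> set s \<Longrightarrow> B \<in> set t \<Longrightarrow> A \<noteq> B \<and> nested A B"
  unfolding overlap_def transverse_def by blast

lemma nested_sym: "nested A B = nested B A"
  unfolding nested_def by auto

lemma overlap_sym: "overlap s t = overlap t s"
  unfolding overlap_def transverse_def using nested_sym by metis

lemma seg_hs: "segment E s \<Longrightarrow> i < length s \<Longrightarrow> s!i \<in> halfspaces E"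
  unfolding segment_def by auto

lemma not_tight:
  assumes "tightly_contains E A B" "C \<in> halfspaces E" "C \<subseteq> A" "C \<noteq> A" "B \<subseteq> C" "B \<noteq> C"
  shows False
proof -
  have "C \<subset> A" "B \<subset> C" using assms(3-6) by auto
  then have "\<exists>C\<in>halfspaces E. C \<subset> A \<and> B \<subset> C" using assms(2) by (intro bexI[of _ C]) simp_all
  then show False using assms(1) unfolding tightly_contains_def by simp
qed

lemma straddle:
  assumes "segment E s" "set s \<subseteq> hs_interval E a b" "\<not> set s \<subseteq> hs_interval E a m" "\<not> set s \<subseteq> hs_interval E m b"
  shows "\<exists>i. Suc i < length s \<and> m \<in> s!i \<and> m \<notin> s!Suc i"
proof -
  obtain A where A: "A \<in> set s" "A \<notin> hs_interval E a m" using assms(3) by auto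
  then have mA: "m \<notin> A" using assms(2) unfolding hs_interval_def by auto
  obtain B where B: "B \<in> set s" "B \<notin> hs_interval E m b" using assms(4) by auto
  then have mB: "m \<in> B" using assms(2) unfolding hs_interval_def by auto
  obtain j where j: "j < length s" "A = s!j" using A(1) by (auto simp: in_set_conv_nth)
  obtain k where k: "k < length s" "B = s!k" using B(1) by (auto simp: in_set_conv_nth)
  have "\<not> j \<le> k"
  proof
    assume "j \<le> k"
    then have "s!k \<subseteq> s!j" using seg_mono[OF assms(1)] k by simp
    then show False using mA mB j k by auto
  qed
  then obtain i where "k \<le> i" "i < j" "\<not> m \<notin> s!i" "m \<notin> s!Suc i"
    using step_lemma[of "\<lambda>i. m \<notin> s!i" k j] mA mB j k by auto
  then show ?thesis using j by (intro exI[of _ i]) auto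
qed

lemma two_straddle:
  assumes "segment E s" "segment E t" "\<not> overlap s t"
    "set s \<subseteq> hs_interval E a b" "set t \<subseteq> hs_interval E a b"
    "Suc i < length s" "m \<in> s!i" "m \<notin> s!Suc i"
    "Suc j < length t" "m \<in> t!j" "m \<notin> t!Suc j" "t!j \<subseteq> s!i"
  shows False
proof -
  have in1: "s!i \<in> set s" "s!Suc i \<in> set s" "t!j \<in> set t" using assms(6,9) by auto
  have n1: "s!i \<noteq> t!j \<and> nested (s!i) (t!j)" by (rule no_ov[OF assms(3) in1(1) in1(3)])
  have n2: "s!Suc i \<noteq> t!j \<and> nested (s!Suc i) (t!j)" by (rule no_ov[OF assms(3) in1(2) in1(3)])
  have mem: "s!Suc i \<in> hs_interval E a b" "t!j \<in> hs_interval E a b" using in1 assms(4,5) by auto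
  have c: "s!Suc i \<subseteq> t!j \<or> t!j \<subseteq> s!Suc i" using cmp[OF mem] n2 by simp
  have sub: "s!Suc i \<subseteq> t!j"
  proof (rule ccontr)
    assume "\<not> s!Suc i \<subseteq> t!j"
    then have "t!j \<subseteq> s!Suc i" using c by simp
    then show False using assms(8,10) by auto
  qed
  have tt: "tightly_contains E (s!i) (s!Suc i)" using assms(1,6) unfolding segment_def by simp
  have hs: "t!j \<in> halfspaces E" using seg_hs[OF assms(2)] assms(9) by simp
  have ne1: "t!j \<noteq> s!i" using n1 by auto
  have ne2: "s!Suc i \<noteq> t!j" using n2 by simp
  show False by (rule not_tight[OF tt hs assms(12) ne1 sub ne2])
qed

lemma block:
  assumes "segment E s" "segment E s'"
    "\<forall>X\<in>set s. \<forall>Y\<in>set s'. (X \<subseteq> Y \<or> Y \<subseteq> X) \<and> X \<noteq> Y"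
    "s'!0 \<subseteq> s!0" "i < length s" "j < length s'"
  shows "s'!j \<subseteq> s!i"
proof -
  have s'0: "s'!0 \<in> set s'" using assms(6) by (intro nth_mem) (cases s', auto)
  have "s'!0 \<subseteq> s!i" if "i < length s" for i
    using that
  proof (induction i)
    case 0 then show ?case using assms(4) by simp
  next
    case (Suc i)
    have IH: "s'!0 \<subseteq> s!i" using Suc by simp
    have mem: "s!i \<in> set s" "s!Suc i \<in> set s" using Suc(2) by auto
    have h1: "s!i \<noteq> s'!0" using bspec[OF bspec[OF assms(3) mem(1)] s'0] by simp
    have h2: "(s!Suc i \<subseteq> s'!0 \<or> s'!0 \<subseteq> s!Suc i) \<and> s!Suc i \<noteq> s'!0" using bspec[OF bspec[OF assms(3) mem(2)] s'0] by simp
    have ne: "s'!0 \<noteq> s!i" "s'!0 \<noteq> s!Suc i" using h1 h2 by auto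
    have c: "s!Suc i \<subseteq> s'!0 \<or> s'!0 \<subseteq> s!Suc i" using h2 by simp
    show ?case
    proof (rule ccontr)
      assume "\<not> s'!0 \<subseteq> s!Suc i"
      then have "s!Suc i \<subseteq> s'!0" using c by blast
      moreover have "tightly_contains E (s!i) (s!Suc i)" using assms(1) Suc(2) unfolding segment_def by simp
      moreover have "s'!0 \<in> halfspaces E" using seg_hs[OF assms(2), of 0] assms(6) by (cases s') auto
      ultimately show False using not_tight[of E "s!i" "s!Suc i" "s'!0"] IH ne by auto
    qed
  qed
  moreover have "s'!j \<subseteq> s'!0" using seg_mono[OF assms(2)] assms(6) by simp
  ultimately show ?thesis using assms(5) by blast
qed



locale actx2 = actx E G \<phi> for E :: "'v \<Rightarrow> 'v \<Rightarrow> bool" and G :: "('g, 'm) monoid_scheme" and \<phi> +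
  fixes \<gamma> :: "'v set list"
  assumes nt: "non_transverse_action E G \<phi>"
    and seg: "segment E \<gamma>"
begin

abbreviation cc where "cc a b \<equiv> c_count E G \<phi> \<gamma> a b"

lemma cc1: "valid E G \<phi> \<gamma> a b S \<Longrightarrow> card S \<le> cc a b"
  using cc_props(1)[OF hs_finite[OF med] copy_ne[OF seg]] by blast

lemma cc2: "\<exists>S. valid E G \<phi> \<gamma> a b S \<and> card S = cc a b"
  using cc_props(2)[OF hs_finite[OF med] copy_ne[OF seg]] by blast

lemma vseg: "valid E G \<phi> \<gamma> a b S \<Longrightarrow> s \<in> S \<Longrightarrow> segment E s"
  using copy_segment[OF seg] unfolding valid_def by auto

lemma vne: "valid E G \<phi> \<gamma> a b S \<Longrightarrow> s \<in> S \<Longrightarrow> s \<noteq> []"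
  using copy_ne[OF seg] unfolding valid_def by auto

lemma upper: "cc a b \<le> cc a m + cc m b + 1"
proof -
  obtain S where S: "valid E G \<phi> \<gamma> a b S" "card S = cc a b" using cc2 by blast
  define S1 where "S1 = {s\<in>S. set s \<subseteq> hs_interval E a m}"
  define S2 where "S2 = {s\<in>S. set s \<subseteq> hs_interval E m b}"
  define S3 where "S3 = S - S1 - S2"
  have fin: "finite S" using S(1) unfolding valid_def by simp
  have v1: "valid E G \<phi> \<gamma> a m S1" using S(1) unfolding valid_def S1_def by auto
  have v2: "valid E G \<phi> \<gamma> m b S2" using S(1) unfolding valid_def S2_def by auto
  have "card S3 \<le> Suc 0"
  proof (subst card_le_Suc0_iff_eq)
    show "finite S3" using fin unfolding S3_def by simp
    show "\<forall>s\<in>S3. \<forall>t\<in>S3. s = t"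
    proof (intro ballI, rule ccontr)
      fix s t assume st: "s \<in> S3" "t \<in> S3" "s \<noteq> t"
      have sS: "s \<in> S" "t \<in> S" using st unfolding S3_def by auto
      have sets: "set s \<subseteq> hs_interval E a b" "set t \<subseteq> hs_interval E a b" using S(1) sS unfolding valid_def by auto
      have nov: "\<not> overlap s t" "\<not> overlap t s" using S(1) sS st(3) unfolding valid_def by auto
      have sg: "segment E s" "segment E t" using vseg[OF S(1)] sS by auto
      have ns: "\<not> set s \<subseteq> hs_interval E a m" "\<not> set s \<subseteq> hs_interval E m b"
        "\<not> set t \<subseteq> hs_interval E a m" "\<not> set t \<subseteq> hs_interval E m b"
        using st(1,2) sS unfolding S3_def S1_def S2_def by auto
      obtain i where i: "Suc i < length s" "m \<in> s!i" "m \<notin> s!Suc i"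
        using straddle[OF sg(1) sets(1) ns(1,2)] by blast
      obtain j where j: "Suc j < length t" "m \<in> t!j" "m \<notin> t!Suc j"
        using straddle[OF sg(2) sets(2) ns(3,4)] by blast
      have mem: "s!i \<in> hs_interval E a b" "t!j \<in> hs_interval E a b" using sets i(1) j(1) by auto
      have "nested (s!i) (t!j)" using no_ov[OF nov(1)] i(1) j(1) by simp
      then have "t!j \<subseteq> s!i \<or> s!i \<subseteq> t!j" using cmp[OF mem] by blast
      then show False
      proof
        assume "t!j \<subseteq> s!i"
        then show False using two_straddle[OF sg(1) sg(2) nov(1) sets i j] by simp
      next
        assume "s!i \<subseteq> t!j"
        then show False using two_straddle[OF sg(2) sg(1) nov(2) sets(2) sets(1) j i] by simp
      qed
    qed
  qed
  moreover have eq: "S = (S1 \<union> S2) \<union> S3" unfolding S1_def S2_def S3_def by auto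
  have "card S \<le> card (S1 \<union> S2) + card S3" using card_Un_le[of "S1 \<union> S2" S3] eq by simp
  moreover have "card (S1 \<union> S2) \<le> card S1 + card S2" by (rule card_Un_le)
  moreover have "card S1 \<le> cc a m" "card S2 \<le> cc m b" using cc1[OF v1] cc1[OF v2] by auto
  ultimately show ?thesis using S(2) by linarith
qed

lemma key:
  assumes v1: "valid E G \<phi> \<gamma> a m S1" and v2: "valid E G \<phi> \<gamma> m b S2"
    and inc1: "hs_interval E a m \<subseteq> hs_interval E a b" and inc2: "hs_interval E m b \<subseteq> hs_interval E a b"
    and s: "s \<in> S1" and t: "t \<in> S2" and ov: "overlap s t"
    and s': "s' \<in> S1" "s' \<noteq> s" and le: "s'!0 \<subseteq> s!0"
  shows False
proof -
  obtain h where h: "h \<in> carrier G" "s = map (\<lambda>A. \<phi> h ` A) \<gamma>" using v1 s unfolding valid_def copies_def by auto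
  obtain h' where h': "h' \<in> carrier G" "s' = map (\<lambda>A. \<phi> h' ` A) \<gamma>" using v1 s' unfolding valid_def copies_def by auto
  obtain k where k: "k \<in> carrier G" "t = map (\<lambda>A. \<phi> k ` A) \<gamma>" using v2 t unfolding valid_def copies_def by auto
  obtain A B where AB: "A \<in> set s" "B \<in> set t" "A = B \<or> transverse A B" using ov unfolding overlap_def by auto
  obtain i where i: "i < length s" "A = s!i" using AB(1) by (auto simp: in_set_conv_nth)
  obtain j where j: "j < length t" "B = t!j" using AB(2) by (auto simp: in_set_conv_nth)
  have Aam: "A \<in> hs_interval E a m" using v1 s AB(1) unfolding valid_def by auto
  have Bmb: "B \<in> hs_interval E m b" using v2 t AB(2) unfolding valid_def by auto
  have "A \<noteq> B" using Aam Bmb unfolding hs_interval_def by auto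
  then have tr: "transverse A B" using AB(3) by simp
  have sg: "segment E s" "segment E s'" using vseg v1 s s' by auto
  have lens: "length s = length \<gamma>" "length s' = length \<gamma>" "length t = length \<gamma>" using h k h' by auto
  have nov: "\<not> overlap s s'" using v1 s s' unfolding valid_def by auto
  have hyp: "\<forall>X\<in>set s. \<forall>Y\<in>set s'. (X \<subseteq> Y \<or> Y \<subseteq> X) \<and> X \<noteq> Y"
  proof (intro ballI)
    fix X Y assume XY: "X \<in> set s" "Y \<in> set s'"
    have mem: "X \<in> hs_interval E a m" "Y \<in> hs_interval E a m" using v1 s s' XY unfolding valid_def by auto
    have n: "X \<noteq> Y \<and> nested X Y" by (rule no_ov[OF nov XY])
    then show "(X \<subseteq> Y \<or> Y \<subseteq> X) \<and> X \<noteq> Y" using cmp[OF mem] by auto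
  qed
  have js: "j < length s'" using j lens by simp
  have blk: "s'!j \<subseteq> s!i" using block[OF sg hyp le i(1) js] .
  have s'j: "s'!j = \<phi> h' ` (\<gamma>!j)" using h' js lens by simp
  have tj: "t!j = \<phi> k ` (\<gamma>!j)" using k j by simp
  have "s'!j \<in> set s'" using js by simp
  then have s'jm: "s'!j \<in> hs_interval E a m" using v1 s'(1) unfolding valid_def by blast
  have "t!j \<in> set t" using j(1) by simp
  then have tjm: "t!j \<in> hs_interval E m b" using v2 t unfolding valid_def by blast
  define g where "g = k \<otimes>\<^bsub>G\<^esub> inv\<^bsub>G\<^esub> h'"
  have g: "g \<in> carrier G" "\<And>x. \<phi> g (\<phi> h' x) = \<phi> k x" using act_comp[OF h'(1) k(1)] unfolding g_def by auto
  have img: "\<phi> g ` (s'!j) = t!j" unfolding s'j tj image_image g(2) by simp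
  have "s'!j \<in> halfspaces E" using s'jm unfolding hs_interval_def by simp
  then have "\<not> transverse (s'!j) (\<phi> g ` (s'!j))" using nt g(1) unfolding non_transverse_action_def by blast
  then have nst: "nested (s'!j) (t!j)" using img unfolding transverse_def by simp
  have mm1: "s'!j \<in> hs_interval E a b" using inc1 s'jm by (rule subsetD)
  have mm2: "t!j \<in> hs_interval E a b" using inc2 tjm by (rule subsetD)
  have "s'!j \<subseteq> t!j \<or> t!j \<subseteq> s'!j" by (rule cmp[OF mm1 mm2 nst])
  moreover have "\<not> s'!j \<subseteq> t!j" using s'jm tjm unfolding hs_interval_def by auto
  ultimately have "t!j \<subseteq> s!i" using blk by auto
  then have "nested A B" using i j unfolding nested_def by auto
  then show False using tr unfolding transverse_def by simp
qed

lemma lower: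
  assumes inc1: "hs_interval E a m \<subseteq> hs_interval E a b" and inc2: "hs_interval E m b \<subseteq> hs_interval E a b"
  shows "cc a m + cc m b \<le> cc a b + 1"
proof -
  obtain S1 where S1: "valid E G \<phi> \<gamma> a m S1" "card S1 = cc a m" using cc2 by blast
  obtain S2 where S2: "valid E G \<phi> \<gamma> m b S2" "card S2 = cc m b" using cc2 by blast
  define Ov where "Ov = {s\<in>S1. \<exists>t\<in>S2. overlap s t}"
  have fin1: "finite S1" "finite S2" using S1 S2 unfolding valid_def by auto
  have OS: "Ov \<subseteq> S1" unfolding Ov_def by auto
  have "card Ov \<le> Suc 0"
  proof (subst card_le_Suc0_iff_eq)
    show "finite Ov" using finite_subset[OF OS fin1(1)] .
    show "\<forall>s\<in>Ov. \<forall>s'\<in>Ov. s = s'"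
    proof (intro ballI, rule ccontr)
      fix s s' assume st: "s \<in> Ov" "s' \<in> Ov" "s \<noteq> s'"
      have sS: "s \<in> S1" "s' \<in> S1" using st OS by auto
      obtain t where t: "t \<in> S2" "overlap s t" using st(1) unfolding Ov_def by auto
      obtain t' where t': "t' \<in> S2" "overlap s' t'" using st(2) unfolding Ov_def by auto
      have ne: "s \<noteq> []" "s' \<noteq> []" using vne S1(1) sS by auto
      have m0: "s!0 \<in> set s" "s'!0 \<in> set s'" using ne by auto
      have nov: "\<not> overlap s s'" using S1(1) sS st(3) unfolding valid_def by auto
      have mem: "s!0 \<in> hs_interval E a m" "s'!0 \<in> hs_interval E a m" using S1(1) sS m0 unfolding valid_def by blast+
      have n: "s!0 \<noteq> s'!0 \<and> nested (s!0) (s'!0)" by (rule no_ov[OF nov m0])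
      then have "s!0 \<subseteq> s'!0 \<or> s'!0 \<subseteq> s!0" using cmp[OF mem] by auto
      then show False
      proof
        assume "s'!0 \<subseteq> s!0"
        then show False using key[OF S1(1) S2(1) inc1 inc2 sS(1) t sS(2)] st(3) by auto
      next
        assume "s!0 \<subseteq> s'!0"
        then show False using key[OF S1(1) S2(1) inc1 inc2 sS(2) t' sS(1)] st(3) by auto
      qed
    qed
  qed
  define S' where "S' = (S1 - Ov) \<union> S2"
  have disj: "(S1 - Ov) \<inter> S2 = {}"
  proof (rule ccontr)
    assume "(S1 - Ov) \<inter> S2 \<noteq> {}"
    then obtain s where s: "s \<in> S1" "s \<notin> Ov" "s \<in> S2" by auto
    have "s \<noteq> []" using vne S1(1) s(1) by auto
    then have "hd s \<in> set s" by simp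
    then have "overlap s s" unfolding overlap_def by blast
    then show False using s unfolding Ov_def by auto
  qed
  have vS': "valid E G \<phi> \<gamma> a b S'"
  proof -
    have "S' \<subseteq> copies G \<phi> \<gamma>" using S1 S2 unfolding valid_def S'_def by auto
    moreover have "finite S'" using fin1 unfolding S'_def by simp
    moreover have "\<forall>s\<in>S'. set s \<subseteq> hs_interval E a b"
    proof
      fix s assume "s \<in> S'"
      then have "s \<in> S1 \<or> s \<in> S2" unfolding S'_def by auto
      then show "set s \<subseteq> hs_interval E a b"
      proof
        assume "s \<in> S1" then have "set s \<subseteq> hs_interval E a m" using S1(1) unfolding valid_def by blast
        then show ?thesis using inc1 by (rule subset_trans)
      next
        assume "s \<in> S2" then have "set s \<subseteq> hs_interval E m b" using S2(1) unfolding valid_def by blast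
        then show ?thesis using inc2 by (rule subset_trans)
      qed
    qed
    moreover have "\<forall>s\<in>S'. \<forall>t\<in>S'. s \<noteq> t \<longrightarrow> \<not> overlap s t"
    proof (intro ballI impI)
      fix s t assume st: "s \<in> S'" "t \<in> S'" "s \<noteq> t"
      show "\<not> overlap s t"
      proof (cases "s \<in> S2")
        case True
        show ?thesis
        proof (cases "t \<in> S2")
          case True then show ?thesis using `s \<in> S2` S2(1) st(3) unfolding valid_def by auto
        next
          case False
          then have "t \<in> S1" "t \<notin> Ov" using st(2) unfolding S'_def by auto
          then have "\<not> overlap t s" using `s \<in> S2` unfolding Ov_def by auto
          then show ?thesis using overlap_sym[of s t] by simp
        qed
      next
        case False
        then have s1: "s \<in> S1" "s \<notin> Ov" using st(1) unfolding S'_def by auto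
        show ?thesis
        proof (cases "t \<in> S2")
          case True then show ?thesis using s1 unfolding Ov_def by auto
        next
          case False
          then have "t \<in> S1" using st(2) unfolding S'_def by auto
          then show ?thesis using s1 S1(1) st(3) unfolding valid_def by auto
        qed
      qed
    qed
    ultimately show ?thesis unfolding valid_def by (intro conjI)
  qed
  have "card S' = card (S1 - Ov) + card S2" unfolding S'_def
    using card_Un_disjoint[OF _ fin1(2) disj] fin1(1) by simp
  moreover have "card (S1 - Ov) = card S1 - card Ov" using card_Diff_subset[OF finite_subset[OF OS fin1(1)] OS] .
  moreover have "card Ov \<le> card S1" using card_mono[OF fin1(1) OS] .
  moreover have "card S' \<le> cc a b" using cc1[OF vS'] .
  ultimately show ?thesis using S1(2) S2(2) `card Ov \<le> Suc 0` by linarith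
qed

end


lemma sep:
  assumes "A \<in> halfspaces E" "m \<in> geod_interval E a b"
  shows "(a \<in> A \<longrightarrow> b \<in> A \<longrightarrow> m \<in> A) \<and> (a \<notin> A \<longrightarrow> b \<notin> A \<longrightarrow> m \<notin> A)"
proof -
  have c1: "convex_vset E A" "convex_vset E (- A)" using assms(1) unfolding halfspaces_def by auto
  show ?thesis
  proof (intro conjI impI)
    assume "a \<in> A" "b \<in> A"
    then show "m \<in> A" using c1(1) assms(2) unfolding convex_vset_def by blast
  next
    assume "a \<notin> A" "b \<notin> A"
    then have "a \<in> - A" "b \<in> - A" by auto
    then have "m \<in> - A" using c1(2) assms(2) unfolding convex_vset_def by blast
    then show "m \<notin> A" by simp
  qed
qed

lemma incl:
  assumes "m \<in> geod_interval E a b"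
  shows "hs_interval E a m \<subseteq> hs_interval E a b" "hs_interval E m b \<subseteq> hs_interval E a b"
    "hs_interval E b m \<subseteq> hs_interval E b a" "hs_interval E m a \<subseteq> hs_interval E b a"
  using sep[OF _ assms] unfolding hs_interval_def by blast+

theorem lemma4p7:
  fixes E :: "'v \<Rightarrow> 'v \<Rightarrow> bool" and G :: "('g, 'm) monoid_scheme" and \<phi> :: "'g \<Rightarrow> 'v \<Rightarrow> 'v"
    and \<gamma> :: "'v set list" and x y z :: 'v
  assumes "median_graph E"
    and "group_action G (UNIV :: 'v set) \<phi>"
    and "\<forall>h\<in>carrier G. \<forall>u v. E u v \<longleftrightarrow> E (\<phi> h u) (\<phi> h v)"
    and "non_transverse_action E G \<phi>"
    and "segment E \<gamma>"
  shows "\<bar>omega E G \<phi> \<gamma> x y + omega E G \<phi> \<gamma> y z + omega E G \<phi> \<gamma> z x\<bar> \<le> 6"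
proof -
  interpret actx2 E G \<phi> \<gamma> by (intro actx2.intro actx.intro actx2_axioms.intro) (fact assms)+
  have om: "omega E G \<phi> \<gamma> a b = int (cc a b) - int (cc b a)" for a b
    unfolding omega_def c_rev by simp
  obtain m where m: "m \<in> geod_interval E x y" "m \<in> geod_interval E y z" "m \<in> geod_interval E x z"
    using assms(1) unfolding median_graph_def by blast
  have l1: "cc x m + cc m y \<le> cc x y + 1" "cc y m + cc m x \<le> cc y x + 1"
    using lower[OF incl(1,2)[OF m(1)]] lower[OF incl(3,4)[OF m(1)]] by auto
  have l2: "cc y m + cc m z \<le> cc y z + 1" "cc z m + cc m y \<le> cc z y + 1"
    using lower[OF incl(1,2)[OF m(2)]] lower[OF incl(3,4)[OF m(2)]] by auto
  have l3: "cc x m + cc m z \<le> cc x z + 1" "cc z m + cc m x \<le> cc z x + 1"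
    using lower[OF incl(1,2)[OF m(3)]] lower[OF incl(3,4)[OF m(3)]] by auto
  have u: "cc x y \<le> cc x m + cc m y + 1" "cc y x \<le> cc y m + cc m x + 1"
     "cc y z \<le> cc y m + cc m z + 1" "cc z y \<le> cc z m + cc m y + 1"
     "cc x z \<le> cc x m + cc m z + 1" "cc z x \<le> cc z m + cc m x + 1"
    using upper by auto
  show ?thesis unfolding om using l1 l2 l3 u by linarith
qed

end
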